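(* For any connected graphs $G$ and $H$, $$dim_s(G\square H)\le \min\{dim_s(G)\,|\partial(H)|,\ |\partial(G)|\,dim_s(H)\}.$$
   Context: Graphs are finite, simple, undirected; for connected $G$, $d_G$ is the shortest-path distance and $I_G[u,v]$ is the set of vertices lying on some shortest $u$–$v$ path. A vertex $w$ strongly resolves vertices $u,v$ if $v\in I_G[u,w]$ or $u\in I_G[v,w]$. A strong resolving set of $G$ is a set $S\subseteq V(G)$ such that every pair of vertices is strongly resolved by some vertex of $S$; $dim_s(G)$ is the minimum cardinality of such a set. A vertex $u$ is maximally distant from $v$ if $d_G(v,w)\le d_G(u,v)$ for every neighbor $w$ of $u$; distinct $u,v$ are mutually maximally distant if each is maximally distant from the other. The boundary $\partial(G)$ is the set of vertices mutually maximally distant with some vertex. $G\square H$ denotes the Cartesian product: vertex set $V(G)\times V(H)$, $(a,b)\sim(c,d)$ iff ($a=c$ and $bd\in E(H)$) or ($b=d$ and $ac\in E(G)$). *)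

theory Defs
  imports Main
begin

record 'a graph =
  verts :: "'a set"
  adj   :: "'a \<Rightarrow> 'a \<Rightarrow> bool"

definition simple_graph :: "'a graph \<Rightarrow> bool" where
  "simple_graph G \<longleftrightarrow> finite (verts G)
     \<and> (\<forall>u v. adj G u v \<longrightarrow> u \<in> verts G \<and> v \<in> verts G)
     \<and> (\<forall>u v. adj G u v \<longrightarrow> adj G v u)
     \<and> (\<forall>u. \<not> adj G u u)"

definition walk_of_len :: "'a graph \<Rightarrow> nat \<Rightarrow> 'a \<Rightarrow> 'a \<Rightarrow> bool" where
  "walk_of_len G k u v \<longleftrightarrow> (\<exists>p. length p = Suc k \<and> hd p = u \<and> last p = v
      \<and> set p \<subseteq> verts G \<and> (\<forall>i<k. adj G (p ! i) (p ! Suc i)))"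

definition connected_graph :: "'a graph \<Rightarrow> bool" where
  "connected_graph G \<longleftrightarrow> simple_graph G \<and> verts G \<noteq> {}
     \<and> (\<forall>u\<in>verts G. \<forall>v\<in>verts G. \<exists>k. walk_of_len G k u v)"

definition gdist :: "'a graph \<Rightarrow> 'a \<Rightarrow> 'a \<Rightarrow> nat" where
  "gdist G u v = (LEAST k. walk_of_len G k u v)"

definition interval :: "'a graph \<Rightarrow> 'a \<Rightarrow> 'a \<Rightarrow> 'a set" where
  "interval G u v = {w \<in> verts G. gdist G u w + gdist G w v = gdist G u v}"

definition strongly_resolves :: "'a graph \<Rightarrow> 'a \<Rightarrow> 'a \<Rightarrow> 'a \<Rightarrow> bool" where
  "strongly_resolves G w u v \<longleftrightarrow> v \<in> interval G u w \<or> u \<in> interval G v w"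

definition strong_resolving_set :: "'a graph \<Rightarrow> 'a set \<Rightarrow> bool" where
  "strong_resolving_set G S \<longleftrightarrow> S \<subseteq> verts G
     \<and> (\<forall>u\<in>verts G. \<forall>v\<in>verts G. u \<noteq> v \<longrightarrow> (\<exists>w\<in>S. strongly_resolves G w u v))"

definition strong_metric_dim :: "'a graph \<Rightarrow> nat" where
  "strong_metric_dim G = (LEAST n. \<exists>S. strong_resolving_set G S \<and> card S = n)"

definition maximally_distant :: "'a graph \<Rightarrow> 'a \<Rightarrow> 'a \<Rightarrow> bool" where
  "maximally_distant G u v \<longleftrightarrow> u \<in> verts G \<and> v \<in> verts G
     \<and> (\<forall>w. adj G u w \<longrightarrow> gdist G v w \<le> gdist G u v)"

definition mutually_maximally_distant :: "'a graph \<Rightarrow> 'a \<Rightarrow> 'a \<Rightarrow> bool" where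
  "mutually_maximally_distant G u v \<longleftrightarrow> u \<noteq> v
     \<and> maximally_distant G u v \<and> maximally_distant G v u"

definition boundary :: "'a graph \<Rightarrow> 'a set" where
  "boundary G = {u \<in> verts G. \<exists>v \<in> verts G. mutually_maximally_distant G u v}"

definition cart_prod :: "'a graph \<Rightarrow> 'b graph \<Rightarrow> ('a \<times> 'b) graph" where
  "cart_prod G H = \<lparr> verts = verts G \<times> verts H,
     adj = (\<lambda>(a, b) (c, d). (a = c \<and> adj H b d) \<or> (b = d \<and> adj G a c)) \<rparr>"

end

theory Submission
  imports Defs
begin


lemma walk_0: "walk_of_len G 0 u v \<longleftrightarrow> u = v \<and> u \<in> verts G"
proof
  assume "walk_of_len G 0 u v"
  then obtain p where p: "length p = Suc 0" "hd p = u" "last p = v" "set p \<subseteq> verts G"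
    unfolding walk_of_len_def by auto
  then obtain x where "p = [x]" by (auto simp: length_Suc_conv)
  with p show "u = v \<and> u \<in> verts G" by auto
next
  assume "u = v \<and> u \<in> verts G"
  then show "walk_of_len G 0 u v" unfolding walk_of_len_def by (intro exI[of _ "[u]"]) auto
qed

lemma walk_Suc: "walk_of_len G (Suc k) u v \<longleftrightarrow> u \<in> verts G \<and> (\<exists>w. adj G u w \<and> walk_of_len G k w v)"
proof
  assume "walk_of_len G (Suc k) u v"
  then obtain p where p: "length p = Suc (Suc k)" "hd p = u" "last p = v" "set p \<subseteq> verts G"
     "\<forall>i<Suc k. adj G (p ! i) (p ! Suc i)"
    unfolding walk_of_len_def by blast
  then obtain x y q where pq: "p = x # y # q" by (auto simp: length_Suc_conv)
  have "walk_of_len G k y v" unfolding walk_of_len_def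
  proof (intro exI[of _ "y # q"] conjI allI impI)
    fix i assume "i < k"
    then show "adj G ((y # q) ! i) ((y # q) ! Suc i)" using p(5)[rule_format, of "Suc i"] pq by auto
  qed (use p pq in auto)
  moreover have "adj G u y" using p(5)[rule_format, of 0] pq p(2) by auto
  ultimately show "u \<in> verts G \<and> (\<exists>w. adj G u w \<and> walk_of_len G k w v)" using p pq by auto
next
  assume "u \<in> verts G \<and> (\<exists>w. adj G u w \<and> walk_of_len G k w v)"
  then obtain w p where u: "u \<in> verts G" "adj G u w" and p: "length p = Suc k" "hd p = w" "last p = v" "set p \<subseteq> verts G"
     "\<forall>i<k. adj G (p ! i) (p ! Suc i)"
    unfolding walk_of_len_def by blast
  have "p ! 0 = w" using p by (cases p) auto
  show "walk_of_len G (Suc k) u v" unfolding walk_of_len_def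
  proof (intro exI[of _ "u # p"] conjI allI impI)
    fix i assume "i < Suc k"
    then show "adj G ((u # p) ! i) ((u # p) ! Suc i)"
      using p u \<open>p ! 0 = w\<close> by (cases i) auto
  qed (use p u in \<open>auto simp: last_ConsR\<close>)
qed



lemma walk_verts: "walk_of_len G k u v \<Longrightarrow> u \<in> verts G \<and> v \<in> verts G"
  by (induction k arbitrary: u) (auto simp: walk_0 walk_Suc)

lemma walk_append: "walk_of_len G k1 u v \<Longrightarrow> walk_of_len G k2 v w \<Longrightarrow> walk_of_len G (k1 + k2) u w"
  by (induction k1 arbitrary: u) (auto simp: walk_0 walk_Suc)

lemma walk_one: "u \<in> verts G \<Longrightarrow> v \<in> verts G \<Longrightarrow> adj G u v \<Longrightarrow> walk_of_len G 1 u v"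
  by (simp add: walk_Suc walk_0)

lemma walk_rev: assumes "simple_graph G" shows "walk_of_len G k u v \<Longrightarrow> walk_of_len G k v u"
proof (induction k arbitrary: u)
  case 0 then show ?case by (auto simp: walk_0)
next
  case (Suc k)
  then obtain w where w: "u \<in> verts G" "adj G u w" "walk_of_len G k w v" by (auto simp: walk_Suc)
  then have "walk_of_len G k v w" using Suc.IH by blast
  moreover have "walk_of_len G 1 w u" using w assms walk_verts[OF w(3)]
    by (intro walk_one) (auto simp: simple_graph_def)
  ultimately show ?case using walk_append[of G k v w 1 u] by simp
qed

context
  fixes G :: "'a graph"
  assumes conn: "connected_graph G"
begin

lemma simpleG: "simple_graph G" using conn by (simp add: connected_graph_def)

lemma gdist_walk: "u \<in> verts G \<Longrightarrow> v \<in> verts G \<Longrightarrow> walk_of_len G (gdist G u v) u v"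
proof -
  assume "u \<in> verts G" "v \<in> verts G"
  then have "\<exists>k. walk_of_len G k u v" using conn unfolding connected_graph_def by blast
  then show ?thesis unfolding gdist_def by (rule LeastI_ex)
qed

lemma gdist_le: "walk_of_len G k u v \<Longrightarrow> gdist G u v \<le> k"
  unfolding gdist_def by (rule Least_le)

lemma gdist_self: "u \<in> verts G \<Longrightarrow> gdist G u u = 0"
  using gdist_le[of 0 u u] by (simp add: walk_0)

lemma gdist_0: "u \<in> verts G \<Longrightarrow> v \<in> verts G \<Longrightarrow> gdist G u v = 0 \<longleftrightarrow> u = v"
  using gdist_walk[of u v] gdist_self[of u] by (auto simp: walk_0)

lemma gdist_sym: "u \<in> verts G \<Longrightarrow> v \<in> verts G \<Longrightarrow> gdist G u v = gdist G v u"
  using gdist_le[OF walk_rev[OF simpleG gdist_walk[of u v]]] gdist_le[OF walk_rev[OF simpleG gdist_walk[of v u]]]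
  by simp

lemma gdist_tri: "u \<in> verts G \<Longrightarrow> v \<in> verts G \<Longrightarrow> w \<in> verts G \<Longrightarrow> gdist G u w \<le> gdist G u v + gdist G v w"
  using gdist_le[OF walk_append[OF gdist_walk[of u v] gdist_walk[of v w]]] by simp

lemma gdist_adj: "adj G u w \<Longrightarrow> gdist G u w \<le> 1"
proof -
  assume a: "adj G u w"
  then have "u \<in> verts G" "w \<in> verts G" using simpleG by (auto simp: simple_graph_def)
  then show ?thesis using gdist_le[OF walk_one[OF _ _ a]] by simp
qed

lemma adj_verts: "adj G u w \<Longrightarrow> u \<in> verts G \<and> w \<in> verts G"
  using simpleG by (auto simp: simple_graph_def)

end

lemma prod_walk_proj:
  "walk_of_len (cart_prod G H) k (a, b) (c, d) \<Longrightarrow>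
     \<exists>k1 k2. k1 + k2 = k \<and> walk_of_len G k1 a c \<and> walk_of_len H k2 b d"
proof (induction k arbitrary: a b)
  case 0 then show ?case by (auto simp: walk_0 cart_prod_def)
next
  case (Suc k)
  then obtain a' b' where w: "(a, b) \<in> verts (cart_prod G H)" "adj (cart_prod G H) (a, b) (a', b')"
     "walk_of_len (cart_prod G H) k (a', b') (c, d)" by (auto simp: walk_Suc)
  from Suc.IH[OF w(3)] obtain k1 k2 where k: "k1 + k2 = k" "walk_of_len G k1 a' c" "walk_of_len H k2 b' d"
    by blast
  have ab: "a \<in> verts G" "b \<in> verts H" using w(1) by (auto simp: cart_prod_def)
  from w(2) have "(a = a' \<and> adj H b b') \<or> (b = b' \<and> adj G a a')" by (auto simp: cart_prod_def)
  then show ?case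
  proof
    assume "a = a' \<and> adj H b b'"
    then have "walk_of_len H (Suc k2) b d" using k ab by (auto simp: walk_Suc)
    then show ?thesis using k \<open>a = a' \<and> adj H b b'\<close> by (intro exI[of _ k1] exI[of _ "Suc k2"]) auto
  next
    assume "b = b' \<and> adj G a a'"
    then have "walk_of_len G (Suc k1) a c" using k ab by (auto simp: walk_Suc)
    then show ?thesis using k \<open>b = b' \<and> adj G a a'\<close> by (intro exI[of _ "Suc k1"] exI[of _ k2]) auto
  qed
qed

lemma prod_walk_G: "walk_of_len G k a c \<Longrightarrow> b \<in> verts H \<Longrightarrow> walk_of_len (cart_prod G H) k (a, b) (c, b)"
  by (induction k arbitrary: a) (auto simp: walk_0 walk_Suc cart_prod_def)

lemma prod_walk_H: "walk_of_len H k b d \<Longrightarrow> a \<in> verts G \<Longrightarrow> walk_of_len (cart_prod G H) k (a, b) (a, d)"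
  by (induction k arbitrary: b) (auto simp: walk_0 walk_Suc cart_prod_def)

lemma prod_gdist:
  assumes "connected_graph G" "connected_graph H" "a \<in> verts G" "c \<in> verts G" "b \<in> verts H" "d \<in> verts H"
  shows "gdist (cart_prod G H) (a, b) (c, d) = gdist G a c + gdist H b d"
proof (rule antisym)
  have "walk_of_len (cart_prod G H) (gdist G a c + gdist H b d) (a, b) (c, d)"
    using walk_append[OF prod_walk_G[OF gdist_walk[OF assms(1,3,4)] assms(5)]
                         prod_walk_H[OF gdist_walk[OF assms(2,5,6)] assms(4)]] .
  then show "gdist (cart_prod G H) (a, b) (c, d) \<le> gdist G a c + gdist H b d"
    unfolding gdist_def by (rule Least_le)
  have "\<exists>k. walk_of_len (cart_prod G H) k (a, b) (c, d)" using \<open>walk_of_len (cart_prod G H) _ _ _\<close> by blast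
  then have "walk_of_len (cart_prod G H) (gdist (cart_prod G H) (a, b) (c, d)) (a, b) (c, d)"
    unfolding gdist_def by (rule LeastI_ex)
  from prod_walk_proj[OF this] obtain k1 k2 where
    "k1 + k2 = gdist (cart_prod G H) (a, b) (c, d)" "walk_of_len G k1 a c" "walk_of_len H k2 b d" by blast
  then show "gdist G a c + gdist H b d \<le> gdist (cart_prod G H) (a, b) (c, d)"
    using gdist_le[OF assms(1)] gdist_le[OF assms(2)] by (metis add_mono)
qed

lemma prod_interval:
  assumes "connected_graph G" "connected_graph H" "a \<in> verts G" "s \<in> verts G" "b \<in> verts H" "t \<in> verts H"
    "c \<in> interval G a s" "d \<in> interval H b t"
  shows "(c, d) \<in> interval (cart_prod G H) (a, b) (s, t)"
proof -
  have c: "c \<in> verts G" and d: "d \<in> verts H" using assms(7,8) by (auto simp: interval_def)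
  show ?thesis using assms(7,8) c d assms(3-6) unfolding interval_def
    by (simp add: prod_gdist[OF assms(1,2)]) (simp add: cart_prod_def)
qed



context
  fixes G :: "'a graph"
  assumes conn: "connected_graph G"
begin

lemma finG: "finite (verts G)" using conn by (simp add: connected_graph_def simple_graph_def)

lemma far_point:
  assumes b: "b \<in> verts G" and d: "d \<in> verts G" and two: "card (verts G) \<ge> 2"
  shows "\<exists>t\<in>verts G. d \<in> interval G b t \<and> gdist G b t > 0 \<and>
           (\<forall>x\<in>verts G. d \<in> interval G b x \<longrightarrow> gdist G b x \<le> gdist G b t)"
proof -
  define A where "A = {x\<in>verts G. d \<in> interval G b x}"
  have finA: "finite A" using finG unfolding A_def by simp
  have dA: "d \<in> A" using b d gdist_self[OF conn d] unfolding A_def interval_def by simp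
  have "\<exists>x\<in>A. gdist G b x > 0"
  proof (cases "d = b")
    case False
    then have "gdist G b d > 0" using gdist_0[OF conn b d] by simp
    then show ?thesis using dA by blast
  next
    case True
    have "\<exists>x\<in>verts G. x \<noteq> b"
    proof (rule ccontr)
      assume "\<not> ?thesis"
      then have "\<forall>x\<in>verts G. \<forall>y\<in>verts G. x = y" using b by metis
      then have "card (verts G) \<le> Suc 0" using card_le_Suc0_iff_eq[OF finG] by simp
      then show False using two by simp
    qed
    then obtain x where x: "x \<in> verts G" "x \<noteq> b" by blast
    have "gdist G b b + gdist G b x = gdist G b x" using gdist_self[OF conn b] by simp
    then have "x \<in> A" using True b x(1) unfolding A_def interval_def by simp
    moreover have "gdist G b x > 0" using gdist_0[OF conn b x(1)] x(2) by simp
    ultimately show ?thesis by blast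
  qed
  then obtain x0 where x0: "x0 \<in> A" "gdist G b x0 > 0" by blast
  define m where "m = Max (gdist G b ` A)"
  have "m \<in> gdist G b ` A" unfolding m_def using finA dA by (intro Max_in) blast+
  then obtain t where t: "t \<in> A" "gdist G b t = m" by blast
  have mx: "\<forall>x\<in>A. gdist G b x \<le> m" unfolding m_def using finA by simp
  show ?thesis
  proof (intro bexI[of _ t] conjI ballI impI)
    show "t \<in> verts G" "d \<in> interval G b t" using t(1) unfolding A_def by auto
    have "gdist G b x0 \<le> m" using mx x0(1) by blast
    then show "0 < gdist G b t" using x0(2) t(2) by simp
    fix x assume "x \<in> verts G" "d \<in> interval G b x"
    then show "gdist G b x \<le> gdist G b t" using mx t(2) unfolding A_def by blast
  qed
qed

lemma far_maxdist:
  assumes b: "b \<in> verts G" and t: "t \<in> verts G" and dI: "d \<in> interval G b t"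
    and mx: "\<forall>x\<in>verts G. d \<in> interval G b x \<longrightarrow> gdist G b x \<le> gdist G b t"
  shows "maximally_distant G t b"
  unfolding maximally_distant_def
proof (intro conjI allI impI b t)
  fix w assume a: "adj G t w"
  have w: "w \<in> verts G" using adj_verts[OF conn a] by simp
  have d: "d \<in> verts G" and dbt: "gdist G b d + gdist G d t = gdist G b t" using dI by (auto simp: interval_def)
  have tw: "gdist G t w \<le> 1" using gdist_adj[OF conn a] .
  show "gdist G b w \<le> gdist G t b"
  proof (rule ccontr)
    assume "\<not> ?thesis"
    then have gt: "gdist G b w > gdist G b t" using gdist_sym[OF conn b t] by simp
    have "gdist G b w \<le> gdist G b t + gdist G t w" using gdist_tri[OF conn b t w] .
    have "gdist G d w \<le> gdist G d t + gdist G t w" using gdist_tri[OF conn d t w] .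
    have "gdist G b w \<le> gdist G b d + gdist G d w" using gdist_tri[OF conn b d w] .
    then have "d \<in> interval G b w" using w d dbt tw gt \<open>gdist G d w \<le> _\<close> \<open>gdist G b w \<le> gdist G b t + _\<close>
      unfolding interval_def by simp
    then have "gdist G b w \<le> gdist G b t" using mx w by blast
    then show False using gt by simp
  qed
qed

lemma boundary_exists:
  assumes b: "b \<in> verts G" and d: "d \<in> verts G" and two: "card (verts G) \<ge> 2"
  shows "\<exists>t\<in>boundary G. d \<in> interval G b t"
proof -
  obtain t where t: "t \<in> verts G" "d \<in> interval G b t" "gdist G b t > 0"
    "\<forall>x\<in>verts G. d \<in> interval G b x \<longrightarrow> gdist G b x \<le> gdist G b t"
    using far_point[OF b d two] by blast
  obtain y where y: "y \<in> verts G" "b \<in> interval G t y" "gdist G t y > 0"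
    "\<forall>x\<in>verts G. b \<in> interval G t x \<longrightarrow> gdist G t x \<le> gdist G t y"
    using far_point[OF t(1) b two] by blast
  have md1: "maximally_distant G t b" using far_maxdist[OF b t(1) t(2) t(4)] .
  have md2: "maximally_distant G y t" using far_maxdist[OF t(1) y(1) y(2) y(4)] .
  have tby: "gdist G t b + gdist G b y = gdist G t y" using y(2) by (simp add: interval_def)
  have md3: "maximally_distant G t y"
    unfolding maximally_distant_def
  proof (intro conjI allI impI t(1) y(1))
    fix w assume a: "adj G t w"
    have w: "w \<in> verts G" using adj_verts[OF conn a] by simp
    have "gdist G b w \<le> gdist G t b" using md1 a unfolding maximally_distant_def by blast
    moreover have "gdist G y w \<le> gdist G y b + gdist G b w" using gdist_tri[OF conn y(1) b w] .
    moreover have "gdist G y b = gdist G b y" using gdist_sym[OF conn y(1) b] .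
    moreover have "gdist G t y = gdist G y t" using gdist_sym[OF conn t(1) y(1)] .
    ultimately show "gdist G y w \<le> gdist G t y" using tby by linarith
  qed
  have "t \<noteq> y" using y(3) gdist_self[OF conn t(1)] by auto
  then have "t \<in> boundary G" using md2 md3 t(1) y(1)
    unfolding boundary_def mutually_maximally_distant_def by blast
  then show ?thesis using t(2) by blast
qed

lemma verts_resolving: "strong_resolving_set G (verts G)"
  unfolding strong_resolving_set_def strongly_resolves_def interval_def
  using gdist_self[OF conn] by (simp, metis add.right_neutral)

lemma dim_attained: "\<exists>S. strong_resolving_set G S \<and> card S = strong_metric_dim G"
proof -
  have "\<exists>n S. strong_resolving_set G S \<and> card S = n" using verts_resolving by blast
  then show ?thesis unfolding strong_metric_dim_def by (rule LeastI_ex)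
qed

lemma resolving_nonempty:
  assumes "strong_resolving_set G S" "card (verts G) \<ge> 2"
  shows "\<exists>s. s \<in> S"
proof -
  have "\<exists>u\<in>verts G. \<exists>v\<in>verts G. u \<noteq> v"
  proof (rule ccontr)
    assume "\<not> ?thesis"
    then have "\<forall>u\<in>verts G. \<forall>v\<in>verts G. u = v" by blast
    then have "card (verts G) \<le> Suc 0" using card_le_Suc0_iff_eq[OF finG] by simp
    then show False using assms(2) by simp
  qed
  then show ?thesis using assms(1) unfolding strong_resolving_set_def by blast
qed

lemma self_interval: "a \<in> verts G \<Longrightarrow> s \<in> verts G \<Longrightarrow> a \<in> interval G a s"
  unfolding interval_def using gdist_self[OF conn] by simp

end



lemma sr_prod:
  assumes cG: "connected_graph G" and cH: "connected_graph H"
    and a: "a \<in> verts G" and c: "c \<in> verts G" and s: "s \<in> verts G"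
    and b: "b \<in> verts H" and d: "d \<in> verts H" and t: "t \<in> verts H"
    and h: "(c \<in> interval G a s \<and> d \<in> interval H b t) \<or> (a \<in> interval G c s \<and> b \<in> interval H d t)"
  shows "strongly_resolves (cart_prod G H) (s, t) (a, b) (c, d)"
  using h prod_interval[OF cG cH a s b t] prod_interval[OF cG cH c s d t]
  unfolding strongly_resolves_def by blast

lemma prod_verts: "verts (cart_prod G H) = verts G \<times> verts H"
  by (simp add: cart_prod_def)

lemma sr_left:
  assumes cG: "connected_graph G" and cH: "connected_graph H"
    and tG: "card (verts G) \<ge> 2" and tH: "card (verts H) \<ge> 2"
    and S: "strong_resolving_set G S"
  shows "strong_resolving_set (cart_prod G H) (S \<times> boundary H)"
  unfolding strong_resolving_set_def prod_verts
proof (intro conjI ballI impI)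
  have "S \<subseteq> verts G" using S by (simp add: strong_resolving_set_def)
  moreover have "boundary H \<subseteq> verts H" by (auto simp: boundary_def)
  ultimately show "S \<times> boundary H \<subseteq> verts G \<times> verts H" by auto
next
  fix u v assume u: "u \<in> verts G \<times> verts H" and v: "v \<in> verts G \<times> verts H" and uv: "u \<noteq> v"
  obtain a b where ab: "u = (a, b)" by (cases u)
  obtain c d where cd: "v = (c, d)" by (cases v)
  have a: "a \<in> verts G" and b: "b \<in> verts H" using u ab by auto
  have c: "c \<in> verts G" and d: "d \<in> verts H" using v cd by auto
  have SV: "S \<subseteq> verts G" using S by (simp add: strong_resolving_set_def)
  have BV: "boundary H \<subseteq> verts H" by (auto simp: boundary_def)
  show "\<exists>w\<in>S \<times> boundary H. strongly_resolves (cart_prod G H) w u v"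
  proof (cases "a = c")
    case False
    then obtain s where s: "s \<in> S" "c \<in> interval G a s \<or> a \<in> interval G c s"
      using S a c unfolding strong_resolving_set_def strongly_resolves_def by blast
    from s(2) show ?thesis
    proof
      assume h: "c \<in> interval G a s"
      obtain t where t: "t \<in> boundary H" "d \<in> interval H b t" using boundary_exists[OF cH b d tH] by blast
      show ?thesis using sr_prod[OF cG cH a c _ b d _] h t s SV BV ab cd by blast
    next
      assume h: "a \<in> interval G c s"
      obtain t where t: "t \<in> boundary H" "b \<in> interval H d t" using boundary_exists[OF cH d b tH] by blast
      show ?thesis using sr_prod[OF cG cH a c _ b d _] h t s SV BV ab cd by blast
    qed
  next
    case True
    obtain s where s: "s \<in> S" using resolving_nonempty[OF cG S tG] by blast
    have h: "c \<in> interval G a s" using True self_interval[OF cG c] s SV by blast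
    obtain t where t: "t \<in> boundary H" "d \<in> interval H b t" using boundary_exists[OF cH b d tH] by blast
    show ?thesis using sr_prod[OF cG cH a c _ b d _] h t s SV BV ab cd by blast
  qed
qed

lemma sr_right:
  assumes cG: "connected_graph G" and cH: "connected_graph H"
    and tG: "card (verts G) \<ge> 2" and tH: "card (verts H) \<ge> 2"
    and T: "strong_resolving_set H T"
  shows "strong_resolving_set (cart_prod G H) (boundary G \<times> T)"
  unfolding strong_resolving_set_def prod_verts
proof (intro conjI ballI impI)
  have "T \<subseteq> verts H" using T by (simp add: strong_resolving_set_def)
  moreover have "boundary G \<subseteq> verts G" by (auto simp: boundary_def)
  ultimately show "boundary G \<times> T \<subseteq> verts G \<times> verts H" by auto
next
  fix u v assume u: "u \<in> verts G \<times> verts H" and v: "v \<in> verts G \<times> verts H" and uv: "u \<noteq> v"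
  obtain a b where ab: "u = (a, b)" by (cases u)
  obtain c d where cd: "v = (c, d)" by (cases v)
  have a: "a \<in> verts G" and b: "b \<in> verts H" using u ab by auto
  have c: "c \<in> verts G" and d: "d \<in> verts H" using v cd by auto
  have SV: "T \<subseteq> verts H" using T by (simp add: strong_resolving_set_def)
  have BV: "boundary G \<subseteq> verts G" by (auto simp: boundary_def)
  show "\<exists>w\<in>boundary G \<times> T. strongly_resolves (cart_prod G H) w u v"
  proof (cases "b = d")
    case False
    then obtain t where t: "t \<in> T" "d \<in> interval H b t \<or> b \<in> interval H d t"
      using T b d unfolding strong_resolving_set_def strongly_resolves_def by blast
    from t(2) show ?thesis
    proof
      assume h: "d \<in> interval H b t"
      obtain s where s: "s \<in> boundary G" "c \<in> interval G a s" using boundary_exists[OF cG a c tG] by blast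
      show ?thesis using sr_prod[OF cG cH a c _ b d _] h t s SV BV ab cd by blast
    next
      assume h: "b \<in> interval H d t"
      obtain s where s: "s \<in> boundary G" "a \<in> interval G c s" using boundary_exists[OF cG c a tG] by blast
      show ?thesis using sr_prod[OF cG cH a c _ b d _] h t s SV BV ab cd by blast
    qed
  next
    case True
    obtain t where t: "t \<in> T" using resolving_nonempty[OF cH T tH] by blast
    have h: "d \<in> interval H b t" using True self_interval[OF cH d] t SV by blast
    obtain s where s: "s \<in> boundary G" "c \<in> interval G a s" using boundary_exists[OF cG a c tG] by blast
    show ?thesis using sr_prod[OF cG cH a c _ b d _] h t s SV BV ab cd by blast
  qed
qed

lemma dim_le: "strong_resolving_set G S \<Longrightarrow> strong_metric_dim G \<le> card S"
  unfolding strong_metric_dim_def by (rule Least_le) blast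

theorem theorem24:
  fixes G :: "'a graph" and H :: "'b graph"
  assumes "connected_graph G" and "connected_graph H"
    and "card (verts G) \<ge> 2" and "card (verts H) \<ge> 2"
  shows "strong_metric_dim (cart_prod G H)
           \<le> min (strong_metric_dim G * card (boundary H))
                 (card (boundary G) * strong_metric_dim H)"
proof -
  obtain S where S: "strong_resolving_set G S" "card S = strong_metric_dim G"
    using dim_attained[OF assms(1)] by blast
  obtain T where T: "strong_resolving_set H T" "card T = strong_metric_dim H"
    using dim_attained[OF assms(2)] by blast
  have "strong_metric_dim (cart_prod G H) \<le> card (S \<times> boundary H)"
    using dim_le sr_left[OF assms S(1)] by blast
  moreover have "strong_metric_dim (cart_prod G H) \<le> card (boundary G \<times> T)"
    using dim_le sr_right[OF assms T(1)] by blast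
  ultimately show ?thesis using S(2) T(2) by (simp add: card_cartesian_product)
qed

end
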